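(* Let $G$ be the star on $k$ vertices and $n\ge 1$. Then $$W(\Gamma^G_n)=\frac{(k-1)^2(2k^2-2k-1)}{k^3(2k-1)}\,2^nk^{2n}-\frac{(k-1)(k-2)}{k^2}\,k^{2n}+\frac{(k-1)(k-2)}{k^2(2k-1)}\,k^n .$$
   Context: Let $G=(V,E)$ be a finite tree with vertex set $V$ of size $k$, and fix an orientation of each edge, so that each edge becomes an ordered pair $e=(s,t)$. Each oriented edge $e=(s,t)$ acts on the set $V^*$ of finite words over the alphabet $V$ by the recursive rule: $e(\emptyset)=\emptyset$, $e(sw)=t\,e(w)$, $e(tw)=sw$, and $e(xw)=xw$ for $x\in V\setminus\{s,t\}$ (words are read left to right, $w\in V^*$). This action preserves word length. For $n\ge 1$, the Schreier graph $\Gamma_n^G$ is the multigraph with vertex set $V^n$ having, for each $u\in V^n$ and each oriented edge $e$ of $G$, one edge joining $u$ and $e(u)$, labelled $e$ (a loop if $e(u)=u$). For a connected graph $H$, the Wiener index is $W(H)=\sum_{\{u,v\}}d_H(u,v)$ over unordered pairs of vertices. The star on $k$ vertices is the tree with one vertex adjacent to all $k-1$ others. *)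

theory Defs
  imports Main "HOL-Library.Library"
begin

fun edge_act :: "'a \<times> 'a \<Rightarrow> 'a list \<Rightarrow> 'a list" where
  "edge_act e [] = []"
| "edge_act (s, t) (x # w) =
     (if x = s then t # edge_act (s, t) w
      else if x = t then s # w
      else x # w)"

definition star_edges :: "'a set \<Rightarrow> 'a \<Rightarrow> 'a set set" where
  "star_edges V c = {{c, x} | x. x \<in> V - {c}}"

definition oriented_star :: "'a set \<Rightarrow> ('a \<times> 'a) set \<Rightarrow> bool" where
  "oriented_star V E \<longleftrightarrow>
     (\<exists>c \<in> V. bij_betw (\<lambda>(s, t). {s, t}) E (star_edges V c))"

definition words :: "'a set \<Rightarrow> nat \<Rightarrow> 'a list set" where
  "words V n = {w. length w = n \<and> set w \<subseteq> V}"

definition schreier_adj :: "'a set \<Rightarrow> ('a \<times> 'a) set \<Rightarrow> nat \<Rightarrow> ('a list \<times> 'a list) set" where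
  "schreier_adj V E n =
     {(u, v). u \<in> words V n \<and> v \<in> words V n \<and>
              (\<exists>e \<in> E. v = edge_act e u \<or> u = edge_act e v)}"

definition schreier_connected :: "'a set \<Rightarrow> ('a \<times> 'a) set \<Rightarrow> nat \<Rightarrow> bool" where
  "schreier_connected V E n \<longleftrightarrow>
     (\<forall>u \<in> words V n. \<forall>v \<in> words V n. (u, v) \<in> (schreier_adj V E n)\<^sup>*)"

definition schreier_dist :: "'a set \<Rightarrow> ('a \<times> 'a) set \<Rightarrow> nat \<Rightarrow> 'a list \<Rightarrow> 'a list \<Rightarrow> nat" where
  "schreier_dist V E n u v = (LEAST m. (u, v) \<in> (schreier_adj V E n) ^^ m)"

text \<open>Wiener index: sum of distances over unordered pairs = half the sum over ordered pairs.\<close>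
definition schreier_wiener :: "'a set \<Rightarrow> ('a \<times> 'a) set \<Rightarrow> nat \<Rightarrow> real" where
  "schreier_wiener V E n =
     (\<Sum>u \<in> words V n. \<Sum>v \<in> words V n. real (schreier_dist V E n u v)) / 2"

end

theory Submission
  imports Defs
begin

definition gdist :: "('b \<times> 'b) set \<Rightarrow> 'b \<Rightarrow> 'b \<Rightarrow> nat" where
  "gdist R u v = (LEAST m. (u, v) \<in> R ^^ m)"

lemma gdist_le: "(u, v) \<in> R ^^ j \<Longrightarrow> gdist R u v \<le> j"
  unfolding gdist_def by (rule Least_le)

lemma gdist_path: "(u, v) \<in> R\<^sup>* \<Longrightarrow> (u, v) \<in> R ^^ gdist R u v"
  unfolding gdist_def by (metis LeastI rtrancl_imp_relpow)

lemma gdist_refl[simp]: "gdist R u u = 0"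
  by (metis gdist_le relpow_0_I le_zero_eq)

lemma gdist_step: "(u, v) \<in> R \<Longrightarrow> (v, w) \<in> R\<^sup>* \<Longrightarrow> gdist R u w \<le> Suc (gdist R v w)"
  by (meson gdist_le gdist_path relpow_Suc_I2)

lemma gdist_next:
  assumes "u \<noteq> w" "(u, w) \<in> R\<^sup>*"
  shows "\<exists>v. (u, v) \<in> R \<and> (v, w) \<in> R\<^sup>* \<and> gdist R u w = Suc (gdist R v w)"
proof -
  have p: "(u, w) \<in> R ^^ gdist R u w" using gdist_path assms(2) .
  then obtain n where n: "gdist R u w = Suc n" using assms(1)
    by (cases "gdist R u w") auto
  with p obtain v where v: "(u, v) \<in> R" "(v, w) \<in> R ^^ n" using relpow_Suc_D2 by metis
  have "gdist R v w \<le> n" using gdist_le v(2) .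
  moreover have vw: "(v, w) \<in> R\<^sup>*" using v(2) relpow_imp_rtrancl by metis
  moreover have "gdist R u w \<le> Suc (gdist R v w)" using gdist_step v(1) vw .
  ultimately show ?thesis using v(1) n by (intro exI[of _ v]) auto
qed

lemma lipschitz_path:
  assumes "\<And>a b. (a, b) \<in> R \<Longrightarrow> F a \<le> F b + (1::nat)"
  shows "(u, v) \<in> R ^^ j \<Longrightarrow> F u \<le> F v + j"
proof (induction j arbitrary: u)
  case 0 thus ?case by simp
next
  case (Suc j)
  then obtain y where "(u, y) \<in> R" "(y, v) \<in> R ^^ j" using relpow_Suc_D2 by metis
  with Suc.IH[of y] assms[of u y] show ?case by simp
qed

lemma gdist_lower:
  assumes "\<And>a b. (a, b) \<in> R \<Longrightarrow> F a \<le> F b + (1::nat)" "(u, v) \<in> R\<^sup>*"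
  shows "F u \<le> F v + gdist R u v"
  using lipschitz_path[OF assms(1) gdist_path[OF assms(2)]] .

lemma gdist_parity:
  fixes P :: "'b \<Rightarrow> bool"
  assumes "\<And>a b. (a, b) \<in> R \<Longrightarrow> a \<noteq> b \<Longrightarrow> P a \<noteq> P b"
  shows "(u, w) \<in> R\<^sup>* \<Longrightarrow> even (gdist R u w) = (P u = P w)"
proof (induction "gdist R u w" arbitrary: u)
  case 0
  then have "(u, w) \<in> R ^^ 0" using gdist_path by metis
  then show ?case using 0 by simp
next
  case (Suc x)
  then have "u \<noteq> w" by auto
  then obtain v where v: "(u, v) \<in> R" "(v, w) \<in> R\<^sup>*" "gdist R u w = Suc (gdist R v w)"
    using gdist_next Suc.prems by metis
  then have "u \<noteq> v" by auto
  then have "P u \<noteq> P v" using assms v(1) by metis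
  moreover have "even (gdist R v w) = (P v = P w)" using Suc v by auto
  ultimately show ?case using v(3) by (cases "P u"; cases "P v"; cases "P w"; auto)
qed

lemma relpow_sym:
  assumes "sym R" shows "(u, v) \<in> R ^^ j \<Longrightarrow> (v, u) \<in> R ^^ j"
proof (induction j arbitrary: v)
  case 0 thus ?case by simp
next
  case (Suc j)
  then obtain y where "(u, y) \<in> R ^^ j" "(y, v) \<in> R" by (meson relpow_Suc_E)
  then show ?case using Suc.IH assms by (meson relpow_Suc_I2 symD)
qed

lemma gdist_sym: "sym R \<Longrightarrow> gdist R u v = gdist R v u"
  unfolding gdist_def by (metis relpow_sym)


lemma act_len[simp]: "length (edge_act e w) = length w"
  by (induction e w rule: edge_act.induct) auto

lemma act_set: "set (edge_act (s, t) w) \<subseteq> insert s (insert t (set w))"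
  by (induction "(s,t)" w rule: edge_act.induct) auto

lemma act_inv[simp]: "edge_act (s, t) (edge_act (t, s) w) = w"
  by (induction "(t,s)" w rule: edge_act.induct) auto

lemma act_same[simp]: "edge_act (s, s) w = w"
  by (induction w) auto

lemma words_0: "words V 0 = {[]}"
  unfolding words_def by auto

lemma words_Suc: "words V (Suc m) = (\<lambda>(a, w). a # w) ` (V \<times> words V m)"
  unfolding words_def
  by (auto simp: image_iff length_Suc_conv)

lemma finite_words: "finite V \<Longrightarrow> finite (words V m)"
  unfolding words_def using finite_lists_length_eq by (simp add: conj_commute)

lemma card_words: "finite V \<Longrightarrow> card (words V m) = card V ^ m"
  unfolding words_def using card_lists_length_eq by (simp add: conj_commute)

lemma sum_words_Suc:
  assumes "finite V"
  shows "(\<Sum>z\<in>words V (Suc m). f z) = (\<Sum>a\<in>V. \<Sum>w\<in>words V m. f (a # w))"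
proof -
  have "inj_on (\<lambda>(a, w). a # w) (V \<times> words V m)" by (auto simp: inj_on_def)
  then have "(\<Sum>z\<in>words V (Suc m). f z) = (\<Sum>x\<in>V \<times> words V m. f ((\<lambda>(a, w). a # w) x))"
    unfolding words_Suc by (simp add: sum.reindex)
  also have "\<dots> = (\<Sum>p\<in>V \<times> words V m. f (fst p # snd p))"
    by (rule sum.cong) (auto simp: split_beta)
  also have "\<dots> = (\<Sum>a\<in>V. \<Sum>w\<in>words V m. f (a # w))"
    by (simp add: sum.cartesian_product split_beta)
  finally show ?thesis .
qed

locale starx =
  fixes V :: "'a set" and E :: "('a \<times> 'a) set" and c :: 'a
  assumes finV: "finite V" and cV: "c \<in> V"
  and Eform: "\<And>e. e \<in> E \<Longrightarrow> \<exists>y \<in> V - {c}. e = (c, y) \<or> e = (y, c)"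
  and Ecov: "\<And>y. y \<in> V - {c} \<Longrightarrow> (c, y) \<in> E \<or> (y, c) \<in> E"
begin

abbreviation "L \<equiv> V - {c}"
abbreviation "W m \<equiv> words V m"
abbreviation "R m \<equiv> schreier_adj V E m"
abbreviation "D m \<equiv> schreier_dist V E m"
abbreviation "pa y \<equiv> edge_act (y, c)"

lemma D_gdist: "D m u v = gdist (R m) u v"
  unfolding schreier_dist_def gdist_def ..

lemma finL: "finite L" using finV by simp

lemma pa_W: "y \<in> V \<Longrightarrow> w \<in> W m \<Longrightarrow> pa y w \<in> W m"
  unfolding words_def using act_set[of y c w] cV by auto

lemma pa_c: "pa y (c # w) = y # w" by simp
lemma pa_y: "y \<noteq> c \<Longrightarrow> pa y (y # w) = c # pa y w" by simp
lemma pa_o: "a \<noteq> y \<Longrightarrow> a \<noteq> c \<Longrightarrow> pa y (a # w) = a # w" by simp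

lemma pa_bij: "y \<in> V \<Longrightarrow> bij_betw (pa y) (W m) (W m)"
proof -
  assume y: "y \<in> V"
  have inj: "inj_on (pa y) (W m)"
    by (metis act_inv inj_on_inverseI)
  have "pa y ` W m = W m"
  proof
    show "pa y ` W m \<subseteq> W m" using pa_W y by auto
    show "W m \<subseteq> pa y ` W m"
    proof
      fix w assume "w \<in> W m"
      then have "edge_act (c, y) w \<in> W m"
        unfolding words_def using act_set[of c y w] cV y by auto
      moreover have "pa y (edge_act (c, y) w) = w" by simp
      ultimately show "w \<in> pa y ` W m" by force
    qed
  qed
  then show ?thesis using inj by (simp add: bij_betw_def)
qed

lemma sum_pa: "y \<in> V \<Longrightarrow> (\<Sum>w\<in>W m. f (pa y w)) = (\<Sum>w\<in>W m. f w)"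
  using sum.reindex_bij_betw[OF pa_bij] by blast

lemma R_iff: "(u, u') \<in> R m \<longleftrightarrow> u \<in> W m \<and> u' \<in> W m \<and> (\<exists>y\<in>L. u' = pa y u \<or> u = pa y u')"
proof
  assume "(u, u') \<in> R m"
  then obtain e where e: "e \<in> E" "u' = edge_act e u \<or> u = edge_act e u'" and uu: "u \<in> W m" "u' \<in> W m"
    unfolding schreier_adj_def by auto
  from Eform[OF e(1)] obtain y where y: "y \<in> L" "e = (c, y) \<or> e = (y, c)" by auto
  from y(2) e(2) have "u' = pa y u \<or> u = pa y u'" by auto
  then show "u \<in> W m \<and> u' \<in> W m \<and> (\<exists>y\<in>L. u' = pa y u \<or> u = pa y u')" using y uu by auto
next
  assume "u \<in> W m \<and> u' \<in> W m \<and> (\<exists>y\<in>L. u' = pa y u \<or> u = pa y u')"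
  then obtain y where y: "y \<in> L" "u' = pa y u \<or> u = pa y u'" and uu: "u \<in> W m" "u' \<in> W m" by auto
  from Ecov[OF y(1)] show "(u, u') \<in> R m"
  proof
    assume "(c, y) \<in> E"
    moreover have "u = edge_act (c, y) u' \<or> u' = edge_act (c, y) u" using y(2) by auto
    ultimately show ?thesis using uu unfolding schreier_adj_def by blast
  next
    assume "(y, c) \<in> E"
    then show ?thesis using uu y(2) unfolding schreier_adj_def by blast
  qed
qed

lemma R_sym: "sym (R m)"
  unfolding schreier_adj_def sym_def by blast

lemma R_pa: "y \<in> L \<Longrightarrow> w \<in> W m \<Longrightarrow> (w, pa y w) \<in> R m"
  using R_iff pa_W by auto

lemma D_sym: "D m u v = D m v u"
  using gdist_sym[OF R_sym] D_gdist by metis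

end


context starx begin

lemma W_Cons[simp]: "a # w \<in> W (Suc m) \<longleftrightarrow> a \<in> V \<and> w \<in> W m"
  unfolding words_def by auto

lemma W_Suc_E: "z \<in> W (Suc m) \<Longrightarrow> (\<And>a w. z = a # w \<Longrightarrow> a \<in> V \<Longrightarrow> w \<in> W m \<Longrightarrow> P) \<Longrightarrow> P"
  unfolding words_Suc by auto

lemma W0: "z \<in> W 0 \<longleftrightarrow> z = []"
  unfolding words_def by auto

lemma R_W: "(u, u') \<in> R m \<Longrightarrow> u \<in> W m \<and> u' \<in> W m"
  using R_iff by blast

lemma R_Suc_cases:
  assumes "(z, z') \<in> R (Suc m)"
  shows "z = z' \<or> (\<exists>y\<in>L. \<exists>w\<in>W m. (z = c # w \<and> z' = y # w) \<or> (z = y # w \<and> z' = c # w)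
            \<or> (z = y # w \<and> z' = c # pa y w) \<or> (z = c # pa y w \<and> z' = y # w))"
proof -
  from assms obtain y where y: "y \<in> L" "z' = pa y z \<or> z = pa y z'" and zz: "z \<in> W (Suc m)" "z' \<in> W (Suc m)"
    using R_iff by blast
  from zz(1) obtain a w where z: "z = a # w" "a \<in> V" "w \<in> W m" by (rule W_Suc_E)
  from zz(2) obtain a' w' where z': "z' = a' # w'" "a' \<in> V" "w' \<in> W m" by (rule W_Suc_E)
  have yc: "y \<noteq> c" using y(1) by blast
  from y(2) show ?thesis
  proof
    assume h: "z' = pa y z"
    show ?thesis
    proof (cases "a = c")
      case True
      then have "z = c # w \<and> z' = y # w" using h z(1) by simp
      then show ?thesis using y(1) z(3) by blast
    next
      case False
      show ?thesis
      proof (cases "a = y")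
        case True
        then have "z = y # w \<and> z' = c # pa y w" using h z(1) yc by simp
        then show ?thesis using y(1) z(3) by blast
      next
        case False
        then have "z' = z" using h z(1) \<open>a \<noteq> c\<close> by simp
        then show ?thesis by blast
      qed
    qed
  next
    assume h: "z = pa y z'"
    show ?thesis
    proof (cases "a' = c")
      case True
      then have "z' = c # w' \<and> z = y # w'" using h z'(1) by simp
      then show ?thesis using y(1) z'(3) by blast
    next
      case False
      show ?thesis
      proof (cases "a' = y")
        case True
        then have "z' = y # w' \<and> z = c # pa y w'" using h z'(1) yc by simp
        then show ?thesis using y(1) z'(3) by blast
      next
        case False
        then have "z' = z" using h z'(1) \<open>a' \<noteq> c\<close> by simp
        then show ?thesis by blast
      qed
    qed
  qed
qed

lemma R_I1: "u \<in> W m \<Longrightarrow> u' \<in> W m \<Longrightarrow> y \<in> L \<Longrightarrow> u' = pa y u \<Longrightarrow> (u, u') \<in> R m"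
  using R_iff by blast
lemma R_I2: "u \<in> W m \<Longrightarrow> u' \<in> W m \<Longrightarrow> y \<in> L \<Longrightarrow> u = pa y u' \<Longrightarrow> (u, u') \<in> R m"
  using R_iff by blast

lemma R_Suc_intro:
  assumes "y \<in> L" "w \<in> W m"
  shows "(c # w, y # w) \<in> R (Suc m)" "(y # w, c # w) \<in> R (Suc m)"
    "(y # w, c # pa y w) \<in> R (Suc m)" "(c # pa y w, y # w) \<in> R (Suc m)"
proof -
  have w: "c # w \<in> W (Suc m)" "y # w \<in> W (Suc m)" "c # pa y w \<in> W (Suc m)"
    using assms cV pa_W by auto
  have e1: "y # w = pa y (c # w)" by simp
  have e2: "c # pa y w = pa y (y # w)" using assms by simp
  show "(c # w, y # w) \<in> R (Suc m)" by (rule R_I1[OF w(1) w(2) assms(1) e1])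
  show "(y # w, c # w) \<in> R (Suc m)" by (rule R_I2[OF w(2) w(1) assms(1) e1])
  show "(y # w, c # pa y w) \<in> R (Suc m)" by (rule R_I1[OF w(2) w(3) assms(1) e2])
  show "(c # pa y w, y # w) \<in> R (Suc m)" by (rule R_I2[OF w(3) w(2) assms(1) e2])
qed

lemma leaf_nbrs:
  assumes "(y # w, z') \<in> R (Suc m)" "y \<in> L"
  shows "z' = y # w \<or> z' = c # w \<or> z' = c # pa y w"
  using R_Suc_cases[OF assms(1)] assms(2) by auto

definition conn :: "nat \<Rightarrow> bool" where
  "conn m \<longleftrightarrow> (\<forall>u\<in>W m. \<forall>v\<in>W m. (u, v) \<in> (R m)\<^sup>*)"

lemma lift_path:
  "(u, v) \<in> (R m) ^^ j \<Longrightarrow> u \<in> W m \<Longrightarrow> (c # u, c # v) \<in> (R (Suc m)) ^^ (2 * j)"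
proof (induction j arbitrary: v)
  case 0 thus ?case by simp
next
  case (Suc j)
  from Suc.prems(1) obtain x where x: "(u, x) \<in> (R m) ^^ j" "(x, v) \<in> R m" by (rule relpow_Suc_E)
  have ih: "(c # u, c # x) \<in> (R (Suc m)) ^^ (2 * j)" using Suc x by blast
  from x(2) obtain y where y: "y \<in> L" "v = pa y x \<or> x = pa y v" and xv: "x \<in> W m" "v \<in> W m"
    using R_iff by blast
  have "(c # x, c # v) \<in> (R (Suc m)) ^^ 2"
  proof (cases "v = pa y x")
    case True
    have "(c # x, c # v) \<in> (R (Suc m)) ^^ Suc (Suc 0)"
      using relpow_Suc_I2[OF R_Suc_intro(1)[OF y(1) xv(1)] relpow_Suc_I2[OF R_Suc_intro(3)[OF y(1) xv(1)] relpow_0_I]]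
      True by simp
    then show ?thesis by (simp add: numeral_2_eq_2)
  next
    case False
    then have "x = pa y v" using y by auto
    have "(c # x, c # v) \<in> (R (Suc m)) ^^ Suc (Suc 0)"
      using relpow_Suc_I2[OF R_Suc_intro(4)[OF y(1) xv(2)] relpow_Suc_I2[OF R_Suc_intro(2)[OF y(1) xv(2)] relpow_0_I]]
      \<open>x = pa y v\<close> by simp
    then show ?thesis by (simp add: numeral_2_eq_2)
  qed
  then have "(c # u, c # v) \<in> (R (Suc m)) ^^ (2 * j + 2)" by (rule relpow_trans[OF ih])
  then show ?case by (simp add: algebra_simps)
qed

lemma conn_all: "conn m"
proof (induction m)
  case 0 thus ?case unfolding conn_def using W0 by auto
next
  case (Suc m)
  have anchor: "(z, c # tl z) \<in> (R (Suc m))\<^sup>*" if "z \<in> W (Suc m)" for z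
  proof -
    obtain a w where z: "z = a # w" "a \<in> V" "w \<in> W m" using \<open>z \<in> W (Suc m)\<close> by (rule W_Suc_E)
    show ?thesis
    proof (cases "a = c")
      case True then show ?thesis using z by simp
    next
      case False then show ?thesis using z R_Suc_intro(2)[of a w m] by auto
    qed
  qed
  have cc: "(c # w, c # w') \<in> (R (Suc m))\<^sup>*" if a: "w \<in> W m" "w' \<in> W m" for w w'
  proof -
    have "(w, w') \<in> (R m)\<^sup>*" using Suc.IH a unfolding conn_def by blast
    then obtain j where "(w, w') \<in> (R m) ^^ j" using rtrancl_imp_relpow by blast
    then have "(c # w, c # w') \<in> (R (Suc m)) ^^ (2 * j)" using lift_path a(1) by blast
    then show ?thesis by (rule relpow_imp_rtrancl)
  qed
  show ?case unfolding conn_def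
  proof (intro ballI)
    fix z z' assume zz: "z \<in> W (Suc m)" "z' \<in> W (Suc m)"
    have t: "tl z \<in> W m" "tl z' \<in> W m" using zz by (auto elim!: W_Suc_E)
    have "(c # tl z', z') \<in> (R (Suc m))\<^sup>*"
      using anchor[OF zz(2)] sym_rtrancl[OF R_sym] unfolding sym_def by blast
    then show "(z, z') \<in> (R (Suc m))\<^sup>*"
      by (rule rtrancl_trans[OF rtrancl_trans[OF anchor[OF zz(1)] cc[OF t]]])
  qed
qed

lemma conn_rt: "u \<in> W m \<Longrightarrow> v \<in> W m \<Longrightarrow> (u, v) \<in> (R m)\<^sup>*"
  using conn_all unfolding conn_def by blast

lemma D_le: "(u, v) \<in> (R m) ^^ j \<Longrightarrow> D m u v \<le> j"
  unfolding D_gdist by (rule gdist_le)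

lemma D_path: "u \<in> W m \<Longrightarrow> v \<in> W m \<Longrightarrow> (u, v) \<in> (R m) ^^ (D m u v)"
  unfolding D_gdist by (rule gdist_path) (rule conn_rt)

lemma D_next: "u \<noteq> v \<Longrightarrow> u \<in> W m \<Longrightarrow> v \<in> W m \<Longrightarrow> \<exists>u'. (u, u') \<in> R m \<and> D m u v = Suc (D m u' v)"
proof -
  assume a: "u \<noteq> v" "u \<in> W m" "v \<in> W m"
  have "(u, v) \<in> (R m)\<^sup>*" using conn_rt a(2,3) .
  from gdist_next[OF a(1) this] show ?thesis unfolding D_gdist by blast
qed

lemma D_lower: "(\<And>a b. (a, b) \<in> R m \<Longrightarrow> F a \<le> F b + (1::nat)) \<Longrightarrow> u \<in> W m \<Longrightarrow> v \<in> W m \<Longrightarrow> F u \<le> F v + D m u v"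
  unfolding D_gdist by (rule gdist_lower) (auto intro: conn_rt)

lemma lip: "(u, u') \<in> R m \<Longrightarrow> v \<in> W m \<Longrightarrow> D m u v \<le> Suc (D m u' v)"
  unfolding D_gdist by (rule gdist_step) (auto intro: conn_rt dest: R_W)

lemma D_refl[simp]: "D m u u = 0"
  unfolding D_gdist by simp

lemma lip_pa1: "y \<in> L \<Longrightarrow> w \<in> W m \<Longrightarrow> v \<in> W m \<Longrightarrow> D m w v \<le> Suc (D m (pa y w) v)"
  using lip R_pa by blast

lemma lip_pa2: "y \<in> L \<Longrightarrow> w \<in> W m \<Longrightarrow> v \<in> W m \<Longrightarrow> D m (pa y w) v \<le> Suc (D m w v)"
proof -
  assume a: "y \<in> L" "w \<in> W m" "v \<in> W m"
  have "(pa y w, w) \<in> R m" using R_pa[OF a(1,2)] R_sym unfolding sym_def by blast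
  from lip[OF this a(3)] show ?thesis .
qed

lemma T1:
  assumes "u \<in> W m" "v \<in> W m"
  shows "D (Suc m) (c # u) (c # v) = 2 * D m u v"
proof (rule antisym)
  have "(u, v) \<in> (R m) ^^ D m u v" using D_path assms by blast
  then show "D (Suc m) (c # u) (c # v) \<le> 2 * D m u v"
    using lift_path assms D_le by blast
next
  define F where "F z = (if hd z = c then 2 * D m (tl z) v else D m (tl z) v + D m (pa (hd z) (tl z)) v)" for z
  have Fl: "F a \<le> F b + 1" if "(a, b) \<in> R (Suc m)" for a b
  proof -
    from R_Suc_cases[OF that] show ?thesis
    proof
      assume "a = b" then show ?thesis by simp
    next
      assume "\<exists>y\<in>L. \<exists>w\<in>W m. (a = c # w \<and> b = y # w) \<or> (a = y # w \<and> b = c # w)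
            \<or> (a = y # w \<and> b = c # pa y w) \<or> (a = c # pa y w \<and> b = y # w)"
      then obtain y w where y: "y \<in> L" "w \<in> W m" and
        cs: "(a = c # w \<and> b = y # w) \<or> (a = y # w \<and> b = c # w)
            \<or> (a = y # w \<and> b = c # pa y w) \<or> (a = c # pa y w \<and> b = y # w)" by blast
      have l1: "D m w v \<le> Suc (D m (pa y w) v)" using lip_pa1 y assms by blast
      have l2: "D m (pa y w) v \<le> Suc (D m w v)" using lip_pa2 y assms by blast
      have yc: "y \<noteq> c" using y by auto
      have F1: "F (c # x) = 2 * D m x v" for x unfolding F_def by simp
      have F2: "F (y # w) = D m w v + D m (pa y w) v" unfolding F_def using yc by simp
      from cs consider "a = c # w \<and> b = y # w" | "a = y # w \<and> b = c # w"
        | "a = y # w \<and> b = c # pa y w" | "a = c # pa y w \<and> b = y # w" by blast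
      then show ?thesis
      proof cases
        case 1 then show ?thesis using F1 F2 l1 l2 by simp
      next
        case 2 then show ?thesis using F1 F2 l1 l2 by simp
      next
        case 3 then show ?thesis using F1 F2 l1 l2 by simp
      next
        case 4 then show ?thesis using F1 F2 l1 l2 by simp
      qed
    qed
  qed
  have "F (c # u) \<le> F (c # v) + D (Suc m) (c # u) (c # v)"
    using D_lower[of "Suc m" F, OF Fl] assms cV by simp
  then show "2 * D m u v \<le> D (Suc m) (c # u) (c # v)" unfolding F_def
    by simp
qed

lemma leaf_dist:
  assumes y: "y \<in> L" and w: "w \<in> W m" and z: "z \<in> W (Suc m)" and ne: "z \<noteq> y # w"
  shows "D (Suc m) (y # w) z = Suc (min (D (Suc m) (c # w) z) (D (Suc m) (c # pa y w) z))"
proof (rule antisym)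
  have "D (Suc m) (y # w) z \<le> Suc (D (Suc m) (c # w) z)"
    using lip[OF R_Suc_intro(2)[OF y w] z] .
  moreover have "D (Suc m) (y # w) z \<le> Suc (D (Suc m) (c # pa y w) z)"
    using lip[OF R_Suc_intro(3)[OF y w] z] .
  ultimately show "D (Suc m) (y # w) z \<le> Suc (min (D (Suc m) (c # w) z) (D (Suc m) (c # pa y w) z))"
    by simp
next
  have "y # w \<in> W (Suc m)" using y w by simp
  then obtain v where v: "(y # w, v) \<in> R (Suc m)" "D (Suc m) (y # w) z = Suc (D (Suc m) v z)"
    using D_next[OF ne[symmetric]] z by blast
  have "v \<noteq> y # w" using v(2) by auto
  then have "v = c # w \<or> v = c # pa y w" using leaf_nbrs[OF v(1) y] by auto
  then show "Suc (min (D (Suc m) (c # w) z) (D (Suc m) (c # pa y w) z)) \<le> D (Suc m) (y # w) z"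
    using v(2) by auto
qed

end


context starx begin

lemma yc: "y \<in> L \<Longrightarrow> y \<noteq> c" by blast

lemma T2:
  assumes y: "y \<in> L" and w: "w \<in> W m" and v: "v \<in> W m"
  shows "D (Suc m) (y # w) (c # v) = Suc (2 * min (D m w v) (D m (pa y w) v))"
proof -
  have ne: "c # v \<noteq> y # w" using y by auto
  have "D (Suc m) (y # w) (c # v) = Suc (min (D (Suc m) (c # w) (c # v)) (D (Suc m) (c # pa y w) (c # v)))"
    using leaf_dist[OF y w _ ne] v cV by simp
  also have "\<dots> = Suc (min (2 * D m w v) (2 * D m (pa y w) v))"
    using T1[OF w v] T1[OF pa_W v] y w by simp
  finally show ?thesis by simp
qed

lemma T2':
  assumes y: "y \<in> L" and w: "w \<in> W m" and v: "v \<in> W m"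
  shows "D (Suc m) (c # v) (y # w) = Suc (2 * min (D m w v) (D m (pa y w) v))"
  using T2[OF assms] D_sym by metis

lemma T3:
  assumes y: "y \<in> L" and w: "w \<in> W m" and y': "y' \<in> L" and w': "w' \<in> W m"
    and ne: "y' # w' \<noteq> y # w"
  shows "D (Suc m) (y # w) (y' # w') = Suc (Suc (2 * min (min (D m w' w) (D m (pa y' w') w))
                                                  (min (D m w' (pa y w)) (D m (pa y' w') (pa y w)))))"
proof -
  have pw: "pa y w \<in> W m" using pa_W y w by blast
  have "D (Suc m) (y # w) (y' # w') = Suc (min (D (Suc m) (c # w) (y' # w')) (D (Suc m) (c # pa y w) (y' # w')))"
    using leaf_dist[OF y w _ ne] y' w' by simp
  also have "\<dots> = Suc (min (Suc (2 * min (D m w' w) (D m (pa y' w') w)))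
                          (Suc (2 * min (D m w' (pa y w)) (D m (pa y' w') (pa y w)))))"
    using T2'[OF y' w' w] T2'[OF y' w' pw] by simp
  finally show ?thesis by simp
qed

lemma D_pos: "u \<noteq> v \<Longrightarrow> u \<in> W m \<Longrightarrow> v \<in> W m \<Longrightarrow> 0 < D m u v"
  using D_path[of u m v] by (cases "D m u v") auto

lemma bip:
  assumes "(u, u') \<in> R m" "u \<noteq> u'" "v \<in> W m"
  shows "D m u v \<noteq> D m u' v"
proof (cases m)
  case 0
  then show ?thesis using R_W[OF assms(1)] assms(2) W0 by auto
next
  case (Suc m')
  define P where "P z = (hd z = c)" for z :: "'a list"
  have Pd: "P a \<noteq> P b" if "(a, b) \<in> R (Suc m')" "a \<noteq> b" for a b
  proof -
    from R_Suc_cases[OF that(1)] that(2) obtain y w where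
      "y \<in> L" "(a = c # w \<and> b = y # w) \<or> (a = y # w \<and> b = c # w)
            \<or> (a = y # w \<and> b = c # pa y w) \<or> (a = c # pa y w \<and> b = y # w)" by blast
    then show ?thesis unfolding P_def by auto
  qed
  have uu: "u \<in> W m" "u' \<in> W m" using R_W assms(1) by auto
  have e1: "even (D m u v) = (P u = P v)"
    unfolding D_gdist Suc by (rule gdist_parity[OF Pd]) (use conn_rt uu assms(3) Suc in auto)
  have e2: "even (D m u' v) = (P u' = P v)"
    unfolding D_gdist Suc by (rule gdist_parity[OF Pd]) (use conn_rt uu assms(3) Suc in auto)
  have "P u \<noteq> P u'" using Pd assms(1,2) Suc by blast
  then show ?thesis using e1 e2 by auto
qed

lemma adj:
  assumes "(u, u') \<in> R m" "u \<noteq> u'" "v \<in> W m"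
  shows "D m u' v = Suc (D m u v) \<or> D m u v = Suc (D m u' v)"
proof -
  have "(u', u) \<in> R m" using assms(1) R_sym unfolding sym_def by blast
  then show ?thesis using lip[OF assms(1,3)] lip[OF _ assms(3)] bip[OF assms] by fastforce
qed

lemma adj_pa:
  assumes "y \<in> L" "w \<in> W m" "pa y w \<noteq> w" "v \<in> W m"
  shows "D m (pa y w) v = Suc (D m w v) \<or> D m w v = Suc (D m (pa y w) v)"
  using adj[OF R_pa[OF assms(1,2)] assms(3)[symmetric] assms(4)] .

lemma arith1:
  fixes a b a' b' :: nat
  assumes "a' = Suc a \<or> a = Suc a'" "b' = Suc b \<or> b = Suc b'" "a \<le> Suc b" "b \<le> Suc a"
    "a' \<le> Suc b'" "b' \<le> Suc a'"
  shows "(min a b \<le> min a' b') = (a < a' \<or> b < b')"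
  using assms by (auto simp: min_def)

lemma VcL: "V = insert c L" using cV by blast

lemma sum_WS: "(\<Sum>z\<in>W (Suc m). g z) = (\<Sum>w\<in>W m. g (c # w)) + (\<Sum>y\<in>L. \<Sum>w\<in>W m. g (y # w))"
proof -
  have "(\<Sum>z\<in>W (Suc m). g z) = (\<Sum>a\<in>V. \<Sum>w\<in>W m. g (a # w))" using sum_words_Suc finV by blast
  also have "\<dots> = (\<Sum>a\<in>insert c L. \<Sum>w\<in>W m. g (a # w))" using VcL by simp
  also have "\<dots> = (\<Sum>w\<in>W m. g (c # w)) + (\<Sum>y\<in>L. \<Sum>w\<in>W m. g (y # w))"
    by (rule sum.insert) (use finL in auto)
  finally show ?thesis .
qed

lemma sum_split_pa:
  assumes f0: "\<And>x. f x x = 0" and y: "y \<in> L"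
  shows "(\<Sum>z\<in>W (Suc m). f z (pa y z)) = (\<Sum>w\<in>W m. f (c # w) (y # w) + f (y # w) (c # pa y w))"
proof -
  have "(\<Sum>z\<in>W (Suc m). f z (pa y z)) = (\<Sum>w\<in>W m. f (c # w) (pa y (c # w))) + (\<Sum>a\<in>L. \<Sum>w\<in>W m. f (a # w) (pa y (a # w)))"
    by (rule sum_WS)
  also have "(\<Sum>a\<in>L. \<Sum>w\<in>W m. f (a # w) (pa y (a # w))) = (\<Sum>a\<in>L. if a = y then (\<Sum>w\<in>W m. f (y # w) (c # pa y w)) else 0)"
  proof (rule sum.cong[OF refl])
    fix a assume a: "a \<in> L"
    show "(\<Sum>w\<in>W m. f (a # w) (pa y (a # w))) = (if a = y then (\<Sum>w\<in>W m. f (y # w) (c # pa y w)) else 0)"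
    proof (cases "a = y")
      case True then show ?thesis using yc[OF y] by simp
    next
      case False then show ?thesis using a f0 by simp
    qed
  qed
  also have "\<dots> = (\<Sum>w\<in>W m. f (y # w) (c # pa y w))" using y finL by simp
  finally show ?thesis using yc[OF y] by (simp add: sum.distrib)
qed

end


context starx begin

definition crs :: "nat \<Rightarrow> 'a list \<Rightarrow> 'a list \<Rightarrow> nat" where
  "crs m u u' = (\<Sum>y\<in>L. \<Sum>w\<in>W m. if (D m u w < D m u' w) \<noteq> (D m u (pa y w) < D m u' (pa y w)) then 1 else 0)"

lemma crs_sym:
  assumes "(u, u') \<in> R m" "u \<noteq> u'"
  shows "crs m u u' = crs m u' u"
proof -
  have ne: "D m u z \<noteq> D m u' z" if "z \<in> W m" for z using bip assms that by blast
  show ?thesis unfolding crs_def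
  proof (intro sum.cong refl)
    fix y w assume y: "y \<in> L" and w: "w \<in> W m"
    have "pa y w \<in> W m" using pa_W y w by blast
    then have "D m u (pa y w) \<noteq> D m u' (pa y w)" "D m u w \<noteq> D m u' w" using ne w by auto
    then show "(if (D m u w < D m u' w) \<noteq> (D m u (pa y w) < D m u' (pa y w)) then 1 else 0) =
          (if (D m u' w < D m u w) \<noteq> (D m u' (pa y w) < D m u (pa y w)) then 1 else (0::nat))"
      by auto
  qed
qed

lemma crs_key:
  assumes IH: "\<And>u u'. (u, u') \<in> R m \<Longrightarrow> u \<noteq> u' \<Longrightarrow> crs m u u' = 2"
    and y0: "y0 \<in> L" and v0: "v0 \<in> W m" and u: "u = v0 \<or> u = pa y0 v0"
  shows "crs (Suc m) (c # u) (y0 # v0) = 2"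
proof -
  define u2 where "u2 = (if u = v0 then pa y0 v0 else v0)"
  have pv0: "pa y0 v0 \<in> W m" using pa_W y0 v0 by blast
  have uW: "u \<in> W m" and u2W: "u2 \<in> W m" using u v0 pv0 unfolding u2_def by auto
  have minsw: "min (f v0) (f (pa y0 v0)) = min (f u) (f u2)" for f :: "'a list \<Rightarrow> nat"
    using u unfolding u2_def by (auto simp: min.commute)
  define \<psi> where "\<psi> z = (D (Suc m) (c # u) z < D (Suc m) (y0 # v0) z)" for z
  have psi_c: "\<psi> (c # w) = (D m u w \<le> D m u2 w)" if w: "w \<in> W m" for w
  proof -
    have "D (Suc m) (c # u) (c # w) = 2 * D m u w" using T1 uW w by blast
    moreover have "D (Suc m) (y0 # v0) (c # w) = Suc (2 * min (D m u w) (D m u2 w))"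
      using T2[OF y0 v0 w] minsw[of "\<lambda>x. D m x w"] by simp
    ultimately show ?thesis unfolding \<psi>_def by auto
  qed
  have psi_l: "\<psi> (y # w) = (min (D m u w) (D m u (pa y w)) \<le> min (D m u2 w) (D m u2 (pa y w)))"
    if y: "y \<in> L" and w: "w \<in> W m" and ne: "y # w \<noteq> y0 # v0" for y w
  proof -
    have pw: "pa y w \<in> W m" using pa_W y w by blast
    have "D (Suc m) (c # u) (y # w) = Suc (2 * min (D m w u) (D m (pa y w) u))"
      using T2'[OF y w uW] .
    moreover have "D (Suc m) (y0 # v0) (y # w) = Suc (Suc (2 * min (min (D m w u) (D m (pa y w) u))
                                                  (min (D m w u2) (D m (pa y w) u2))))"
      using T3[OF y0 v0 y w ne] minsw[of "\<lambda>x. min (D m w x) (D m (pa y w) x)"] by simp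
    ultimately have "\<psi> (y # w) = (min (D m w u) (D m (pa y w) u) \<le> min (D m w u2) (D m (pa y w) u2))"
      unfolding \<psi>_def by auto
    moreover have "D m w u = D m u w" "D m (pa y w) u = D m u (pa y w)"
      "D m w u2 = D m u2 w" "D m (pa y w) u2 = D m u2 (pa y w)" by (rule D_sym)+
    ultimately show ?thesis by simp
  qed
  have psi_0: "\<not> \<psi> (y0 # v0)" unfolding \<psi>_def by simp
  define ind where "ind p q = (if \<psi> p \<noteq> \<psi> q then 1 else (0::nat))" for p q
  have crsS: "crs (Suc m) (c # u) (y0 # v0) = (\<Sum>y\<in>L. \<Sum>w\<in>W m. ind (c # w) (y # w) + ind (y # w) (c # pa y w))"
    unfolding crs_def
    apply (rule sum.cong[OF refl])
    subgoal for y
      using sum_split_pa[of ind y m] unfolding ind_def \<psi>_def by simp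
    done
  show ?thesis
  proof (cases "u2 = u")
    case True
    have "ind (c # w) (y # w) + ind (y # w) (c # pa y w) = (if y = y0 \<and> w = v0 then 2 else 0)"
      if y: "y \<in> L" and w: "w \<in> W m" for y w
    proof -
      have pw: "pa y w \<in> W m" using pa_W y w by blast
      have a: "\<psi> (c # w)" "\<psi> (c # pa y w)" using psi_c w pw True by auto
      show ?thesis
      proof (cases "y = y0 \<and> w = v0")
        case True then show ?thesis using a psi_0 unfolding ind_def by auto
      next
        case False
        then have "y # w \<noteq> y0 # v0" by auto
        then have "\<psi> (y # w)" using psi_l[OF y w] \<open>u2 = u\<close> by simp
        then show ?thesis using a False unfolding ind_def by auto
      qed
    qed
    then have "crs (Suc m) (c # u) (y0 # v0) = (\<Sum>y\<in>L. \<Sum>w\<in>W m. if y = y0 \<and> w = v0 then 2 else 0)"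
      using crsS by simp
    also have "\<dots> = (\<Sum>y\<in>L. if y = y0 then 2 else 0)"
      by (rule sum.cong[OF refl]) (use v0 finite_words[OF finV] in auto)
    also have "\<dots> = 2" using y0 finL by simp
    finally show ?thesis .
  next
    case False
    have adj0: "(u, u2) \<in> R m"
    proof -
      have "(v0, pa y0 v0) \<in> R m" using R_pa y0 v0 by blast
      moreover have "(pa y0 v0, v0) \<in> R m" using calculation R_sym unfolding sym_def by blast
      ultimately show ?thesis using u unfolding u2_def by auto
    qed
    have une: "u \<noteq> u2" using False by auto
    have nsame: "D m u x \<noteq> D m u2 x" if "x \<in> W m" for x using bip[OF adj0 une that] .
    have psi_c': "\<psi> (c # w) = (D m u w < D m u2 w)" if w: "w \<in> W m" for w
      using psi_c[OF w] nsame[OF w] by auto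
    have pt: "ind (c # w) (y # w) + ind (y # w) (c # pa y w) =
       (if (D m u w < D m u2 w) \<noteq> (D m u (pa y w) < D m u2 (pa y w)) then 1 else 0)"
      if y: "y \<in> L" and w: "w \<in> W m" for y w
    proof -
      have pw: "pa y w \<in> W m" using pa_W y w by blast
      show ?thesis
      proof (cases "y = y0 \<and> w = v0")
        case True
        have d1: "D m u2 u > 0" by (rule D_pos[OF une[symmetric] u2W uW])
        show ?thesis
        proof (cases "u = v0")
          case True
          then have pe: "pa y0 v0 = u2" unfolding u2_def by simp
          have a1: "\<psi> (c # v0)" using psi_c'[OF v0] d1 True by simp
          have a2: "\<not> \<psi> (c # pa y0 v0)" using psi_c'[OF pv0] pe by simp
          have b1: "D m u v0 < D m u2 v0" using d1 True by simp
          have b2: "\<not> D m u (pa y0 v0) < D m u2 (pa y0 v0)" using pe by simp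
          show ?thesis using \<open>y = y0 \<and> w = v0\<close> a1 a2 b1 b2 psi_0 unfolding ind_def by simp
        next
          case False
          then have pe: "u = pa y0 v0" "u2 = v0" using u unfolding u2_def by auto
          have a1: "\<not> \<psi> (c # v0)" using psi_c'[OF v0] pe by simp
          have a2: "\<psi> (c # pa y0 v0)" using psi_c'[OF pv0] pe d1 by simp
          have b1: "\<not> D m u v0 < D m u2 v0" using pe by simp
          have b2: "D m u (pa y0 v0) < D m u2 (pa y0 v0)" using pe d1 by simp
          show ?thesis using \<open>y = y0 \<and> w = v0\<close> a1 a2 b1 b2 psi_0 unfolding ind_def by simp
        qed
      next
        case False
        then have ne: "y # w \<noteq> y0 # v0" by auto
        have "\<psi> (y # w) = (D m u w < D m u2 w \<or> D m u (pa y w) < D m u2 (pa y w))"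
        proof -
          have "(min (D m u w) (D m u (pa y w)) \<le> min (D m u2 w) (D m u2 (pa y w))) =
                (D m u w < D m u2 w \<or> D m u (pa y w) < D m u2 (pa y w))"
          proof (rule arith1)
            show "D m u2 w = Suc (D m u w) \<or> D m u w = Suc (D m u2 w)" using adj[OF adj0 une w] .
            show "D m u2 (pa y w) = Suc (D m u (pa y w)) \<or> D m u (pa y w) = Suc (D m u2 (pa y w))"
              using adj[OF adj0 une pw] .
            show "D m u w \<le> Suc (D m u (pa y w))" using lip_pa1[OF y w uW] D_sym[of m u] D_sym[of m u2] by simp
            show "D m u (pa y w) \<le> Suc (D m u w)" using lip_pa2[OF y w uW] D_sym[of m u] D_sym[of m u2] by simp
            show "D m u2 w \<le> Suc (D m u2 (pa y w))" using lip_pa1[OF y w u2W] D_sym[of m u] D_sym[of m u2] by simp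
            show "D m u2 (pa y w) \<le> Suc (D m u2 w)" using lip_pa2[OF y w u2W] D_sym[of m u] D_sym[of m u2] by simp
          qed
          then show ?thesis using psi_l[OF y w ne] by simp
        qed
        then show ?thesis using psi_c'[OF w] psi_c'[OF pw] unfolding ind_def by (simp split: if_split)
      qed
    qed
    have "crs (Suc m) (c # u) (y0 # v0) = (\<Sum>y\<in>L. \<Sum>w\<in>W m. ind (c # w) (y # w) + ind (y # w) (c # pa y w))"
      by (rule crsS)
    also have "\<dots> = crs m u u2"
      unfolding crs_def
      by (rule sum.cong[OF refl], rule sum.cong[OF refl], rule pt) auto
    finally have "crs (Suc m) (c # u) (y0 # v0) = crs m u u2" .
    then show ?thesis using IH adj0 une by simp
  qed
qed

lemma crs2: "(u, u') \<in> R m \<Longrightarrow> u \<noteq> u' \<Longrightarrow> crs m u u' = 2"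
proof (induction m arbitrary: u u')
  case 0
  then show ?case using R_W[OF 0(1)] W0 by auto
next
  case (Suc m)
  note IH = Suc.IH
  from R_Suc_cases[OF Suc.prems(1)] Suc.prems(2) obtain y w where yw: "y \<in> L" "w \<in> W m" and
    cs: "(u = c # w \<and> u' = y # w) \<or> (u = y # w \<and> u' = c # w)
            \<or> (u = y # w \<and> u' = c # pa y w) \<or> (u = c # pa y w \<and> u' = y # w)" by blast
  have k1: "crs (Suc m) (c # w) (y # w) = 2" using crs_key[OF IH yw] by simp
  have k2: "crs (Suc m) (c # pa y w) (y # w) = 2" using crs_key[OF IH yw] by simp
  have r1: "(c # w, y # w) \<in> R (Suc m)" "(c # pa y w, y # w) \<in> R (Suc m)"
    using R_Suc_intro yw by blast+
  have n1: "c # w \<noteq> y # w" "c # pa y w \<noteq> y # w" using yw by auto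
  have s1: "crs (Suc m) (y # w) (c # w) = 2" using crs_sym[OF r1(1) n1(1)] k1 by simp
  have s2: "crs (Suc m) (y # w) (c # pa y w) = 2" using crs_sym[OF r1(2) n1(2)] k2 by simp
  from cs show ?case using k1 k2 s1 s2 by auto
qed

end


lemma arith2:
  fixes a b a' b' :: nat
  assumes "p \<Longrightarrow> a' = Suc a \<or> a = Suc a'" "\<not> p \<Longrightarrow> a' = a"
    "p \<Longrightarrow> b' = Suc b \<or> b = Suc b'" "\<not> p \<Longrightarrow> b' = b"
    "q \<Longrightarrow> b = Suc a \<or> a = Suc b" "\<not> q \<Longrightarrow> b = a"
    "q \<Longrightarrow> b' = Suc a' \<or> a' = Suc b'" "\<not> q \<Longrightarrow> b' = a'"
  shows "4 * int (min (min a b) (min a' b')) = int a + int b + int a' + int b'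
     - 2 * (if p then 1 else 0) - 2 * (if q then 1 else 0) + 2 * (if (a < a') \<noteq> (b < b') then 1 else 0)"
proof (cases p; cases q)
  assume p q
  then show ?thesis using assms(1,3,5,7) by (auto simp: min_def)
next
  assume p "\<not> q"
  then show ?thesis using assms(1,3,6,8) by (auto simp: min_def)
next
  assume "\<not> p" q
  then show ?thesis using assms(2,4,5,7) by (auto simp: min_def)
next
  assume "\<not> p" "\<not> q"
  then show ?thesis using assms(2,4,6,8) by (auto simp: min_def)
qed

context starx begin

abbreviation "ix b \<equiv> (if b then 1 else 0 :: int)"

lemma P_cc: "u \<in> W m \<Longrightarrow> v \<in> W m \<Longrightarrow> int (D (Suc m) (c # u) (c # v)) = 2 * int (D m u v)"
  using T1 by simp

lemma P_lc:
  assumes y: "y \<in> L" and w: "w \<in> W m" and v: "v \<in> W m"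
  shows "int (D (Suc m) (y # w) (c # v)) = int (D m w v) + int (D m (pa y w) v) + ix (pa y w = w)"
proof (cases "pa y w = w")
  case True
  then show ?thesis using T2[OF y w v] by simp
next
  case False
  have "D m (pa y w) v = Suc (D m w v) \<or> D m w v = Suc (D m (pa y w) v)"
    using adj_pa[OF y w False v] .
  then show ?thesis using T2[OF y w v] False by (auto simp: min_def)
qed

lemma P_cl:
  assumes y: "y \<in> L" and w: "w \<in> W m" and v: "v \<in> W m"
  shows "int (D (Suc m) (c # v) (y # w)) = int (D m v w) + int (D m v (pa y w)) + ix (pa y w = w)"
proof -
  have "D (Suc m) (c # v) (y # w) = D (Suc m) (y # w) (c # v)" "D m v w = D m w v"
    "D m v (pa y w) = D m (pa y w) v" by (rule D_sym)+
  then show ?thesis using P_lc[OF assms] by simp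
qed

definition cr :: "nat \<Rightarrow> 'a \<Rightarrow> 'a list \<Rightarrow> 'a \<Rightarrow> 'a list \<Rightarrow> int" where
  "cr m y w y' w' = ix ((D m w w' < D m (pa y w) w') \<noteq> (D m w (pa y' w') < D m (pa y w) (pa y' w')))"

lemma D_one: "y \<in> L \<Longrightarrow> w \<in> W m \<Longrightarrow> pa y w \<noteq> w \<Longrightarrow> D m w (pa y w) = 1"
proof -
  assume a: "y \<in> L" "w \<in> W m" "pa y w \<noteq> w"
  have "(w, pa y w) \<in> (R m) ^^ 1" using R_pa[OF a(1,2)] by simp
  then have "D m w (pa y w) \<le> 1" by (rule D_le)
  moreover have "0 < D m w (pa y w)" by (rule D_pos[OF a(3)[symmetric] a(2) pa_W]) (use a in auto)
  ultimately show ?thesis by simp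
qed

lemma P_ll:
  assumes y: "y \<in> L" and w: "w \<in> W m" and y': "y' \<in> L" and w': "w' \<in> W m"
  shows "2 * int (D (Suc m) (y # w) (y' # w')) = 4 + int (D m w w') + int (D m w (pa y' w'))
      + int (D m (pa y w) w') + int (D m (pa y w) (pa y' w'))
      - 2 * ix (pa y w \<noteq> w) - 2 * ix (pa y' w' \<noteq> w') + 2 * cr m y w y' w' - 4 * ix (y = y' \<and> w = w')"
proof (cases "y = y' \<and> w = w'")
  case True
  then have e: "y' = y" "w' = w" by auto
  show ?thesis
  proof (cases "pa y w = w")
    case True
    then show ?thesis using e unfolding cr_def by simp
  next
    case False
    have d1: "D m w (pa y w) = 1" using D_one[OF y w False] .
    have d2: "D m (pa y w) w = 1" using d1 D_sym by metis
    show ?thesis using e False d1 d2 unfolding cr_def by simp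
  qed
next
  case False
  have ne: "y' # w' \<noteq> y # w" using False by auto
  have pw: "pa y w \<in> W m" and pw': "pa y' w' \<in> W m" using pa_W y w y' w' by auto
  have t3: "D (Suc m) (y # w) (y' # w') = Suc (Suc (2 * min (min (D m w w') (D m w (pa y' w')))
                                                  (min (D m (pa y w) w') (D m (pa y w) (pa y' w')))))"
  proof -
    have "D m w' w = D m w w'" "D m (pa y' w') w = D m w (pa y' w')"
      "D m w' (pa y w) = D m (pa y w) w'" "D m (pa y' w') (pa y w) = D m (pa y w) (pa y' w')"
      by (rule D_sym)+
    then show ?thesis using T3[OF y w y' w' ne] by simp
  qed
  have ar: "4 * int (min (min (D m w w') (D m w (pa y' w'))) (min (D m (pa y w) w') (D m (pa y w) (pa y' w'))))
     = int (D m w w') + int (D m w (pa y' w')) + int (D m (pa y w) w') + int (D m (pa y w) (pa y' w'))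
     - 2 * ix (pa y w \<noteq> w) - 2 * ix (pa y' w' \<noteq> w')
     + 2 * ix ((D m w w' < D m (pa y w) w') \<noteq> (D m w (pa y' w') < D m (pa y w) (pa y' w')))"
  proof (rule arith2)
    show "D m (pa y w) w' = Suc (D m w w') \<or> D m w w' = Suc (D m (pa y w) w')" if "pa y w \<noteq> w"
      using adj_pa[OF y w that w'] .
    show "D m (pa y w) w' = D m w w'" if "\<not> pa y w \<noteq> w" using that by simp
    show "D m (pa y w) (pa y' w') = Suc (D m w (pa y' w')) \<or> D m w (pa y' w') = Suc (D m (pa y w) (pa y' w'))"
      if "pa y w \<noteq> w" using adj_pa[OF y w that pw'] .
    show "D m (pa y w) (pa y' w') = D m w (pa y' w')" if "\<not> pa y w \<noteq> w" using that by simp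
    have s1: "D m w (pa y' w') = D m (pa y' w') w" "D m w w' = D m w' w" by (rule D_sym)+
    show "D m w (pa y' w') = Suc (D m w w') \<or> D m w w' = Suc (D m w (pa y' w'))" if "pa y' w' \<noteq> w'"
      using adj_pa[OF y' w' that w] s1 by simp
    show "D m w (pa y' w') = D m w w'" if "\<not> pa y' w' \<noteq> w'" using that by simp
    have s2: "D m (pa y w) (pa y' w') = D m (pa y' w') (pa y w)" "D m (pa y w) w' = D m w' (pa y w)" by (rule D_sym)+
    show "D m (pa y w) (pa y' w') = Suc (D m (pa y w) w') \<or> D m (pa y w) w' = Suc (D m (pa y w) (pa y' w'))"
      if "pa y' w' \<noteq> w'" using adj_pa[OF y' w' that pw] s2 by simp
    show "D m (pa y w) (pa y' w') = D m (pa y w) w'" if "\<not> pa y' w' \<noteq> w'" using that by simp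
  qed
  show ?thesis using t3 ar False unfolding cr_def by simp
qed

end


context starx begin

definition Sd :: "nat \<Rightarrow> int" where
  "Sd m = (\<Sum>u\<in>W m. \<Sum>v\<in>W m. int (D m u v))"

definition fx :: "nat \<Rightarrow> int" where
  "fx m = (\<Sum>y\<in>L. \<Sum>w\<in>W m. ix (pa y w = w))"

lemma finW: "finite (W m)" using finite_words finV by blast

lemma sumpa: "y \<in> L \<Longrightarrow> (\<Sum>w\<in>W m. g (pa y w)) = (\<Sum>w\<in>W m. g w)"
  using sum_pa[where y=y and m=m and f=g] by blast

lemma nfx: "(\<Sum>y\<in>L. \<Sum>w\<in>W m. ix (pa y w \<noteq> w)) = int (card L) * int (card (W m)) - fx m"
proof -
  have "(\<Sum>y\<in>L. \<Sum>w\<in>W m. ix (pa y w \<noteq> w)) = (\<Sum>y\<in>L. \<Sum>w\<in>W m. 1 - ix (pa y w = w))"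
    by (rule sum.cong[OF refl], rule sum.cong[OF refl]) simp
  also have "\<dots> = int (card L) * int (card (W m)) - fx m"
    unfolding fx_def by (simp add: sum_subtractf)
  finally show ?thesis .
qed

lemma partA: "(\<Sum>w\<in>W m. \<Sum>w'\<in>W m. int (D (Suc m) (c # w) (c # w'))) = 2 * Sd m"
  unfolding Sd_def by (simp add: P_cc sum_distrib_left)

lemma partB: "(\<Sum>w\<in>W m. \<Sum>y'\<in>L. \<Sum>w'\<in>W m. int (D (Suc m) (c # w) (y' # w'))) =
   2 * int (card L) * Sd m + int (card (W m)) * fx m"
proof -
  have "(\<Sum>w\<in>W m. \<Sum>y'\<in>L. \<Sum>w'\<in>W m. int (D (Suc m) (c # w) (y' # w'))) =
        (\<Sum>w\<in>W m. \<Sum>y'\<in>L. 2 * (\<Sum>w'\<in>W m. int (D m w w')) + (\<Sum>w'\<in>W m. ix (pa y' w' = w')))"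
  proof (rule sum.cong[OF refl], rule sum.cong[OF refl])
    fix w y' assume w: "w \<in> W m" and y': "y' \<in> L"
    have "(\<Sum>w'\<in>W m. int (D (Suc m) (c # w) (y' # w'))) =
          (\<Sum>w'\<in>W m. int (D m w w') + int (D m w (pa y' w')) + ix (pa y' w' = w'))"
      by (rule sum.cong[OF refl]) (rule P_cl[OF y' _ w])
    also have "\<dots> = (\<Sum>w'\<in>W m. int (D m w w')) + (\<Sum>w'\<in>W m. int (D m w (pa y' w'))) + (\<Sum>w'\<in>W m. ix (pa y' w' = w'))"
      by (simp add: sum.distrib)
    also have "(\<Sum>w'\<in>W m. int (D m w (pa y' w'))) = (\<Sum>w'\<in>W m. int (D m w w'))"
      by (rule sumpa[OF y'])
    finally show "(\<Sum>w'\<in>W m. int (D (Suc m) (c # w) (y' # w'))) =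
          2 * (\<Sum>w'\<in>W m. int (D m w w')) + (\<Sum>w'\<in>W m. ix (pa y' w' = w'))" by simp
  qed
  also have "\<dots> = 2 * int (card L) * Sd m + int (card (W m)) * fx m"
    unfolding Sd_def fx_def by (simp add: sum.distrib sum_distrib_left algebra_simps)
  finally show ?thesis .
qed

lemma partC: "(\<Sum>y\<in>L. \<Sum>w\<in>W m. \<Sum>w'\<in>W m. int (D (Suc m) (y # w) (c # w'))) =
   2 * int (card L) * Sd m + int (card (W m)) * fx m"
proof -
  have "(\<Sum>y\<in>L. \<Sum>w\<in>W m. \<Sum>w'\<in>W m. int (D (Suc m) (y # w) (c # w'))) =
        (\<Sum>y\<in>L. 2 * Sd m + int (card (W m)) * (\<Sum>w\<in>W m. ix (pa y w = w)))"
  proof (rule sum.cong[OF refl])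
    fix y assume y: "y \<in> L"
    have "(\<Sum>w\<in>W m. \<Sum>w'\<in>W m. int (D (Suc m) (y # w) (c # w'))) =
          (\<Sum>w\<in>W m. \<Sum>w'\<in>W m. int (D m w w') + int (D m (pa y w) w') + ix (pa y w = w))"
      by (rule sum.cong[OF refl], rule sum.cong[OF refl]) (rule P_lc[OF y])
    also have "\<dots> = (\<Sum>w\<in>W m. \<Sum>w'\<in>W m. int (D m w w')) + (\<Sum>w\<in>W m. \<Sum>w'\<in>W m. int (D m (pa y w) w'))
        + (\<Sum>w\<in>W m. int (card (W m)) * ix (pa y w = w))"
      by (simp add: sum.distrib)
    also have "(\<Sum>w\<in>W m. \<Sum>w'\<in>W m. int (D m (pa y w) w')) = (\<Sum>w\<in>W m. \<Sum>w'\<in>W m. int (D m w w'))"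
      using sumpa[OF y, of "\<lambda>x. \<Sum>w'\<in>W m. int (D m x w')"] .
    finally show "(\<Sum>w\<in>W m. \<Sum>w'\<in>W m. int (D (Suc m) (y # w) (c # w'))) =
        2 * Sd m + int (card (W m)) * (\<Sum>w\<in>W m. ix (pa y w = w))"
      unfolding Sd_def by (simp add: sum_distrib_left)
  qed
  also have "\<dots> = 2 * int (card L) * Sd m + int (card (W m)) * fx m"
    unfolding fx_def by (simp add: sum.distrib sum_distrib_left algebra_simps)
  finally show ?thesis .
qed

end

lemma lin9:
  fixes f1 f2 f3 f4 f5 f6 f7 f8 f9 :: "'b \<Rightarrow> 'c \<Rightarrow> int"
  shows "(\<Sum>x\<in>A. \<Sum>z\<in>B. f1 x z + f2 x z + f3 x z + f4 x z + f5 x z - 2 * f6 x z - 2 * f7 x z + 2 * f8 x z - 4 * f9 x z)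
   = (\<Sum>x\<in>A. \<Sum>z\<in>B. f1 x z) + (\<Sum>x\<in>A. \<Sum>z\<in>B. f2 x z) + (\<Sum>x\<in>A. \<Sum>z\<in>B. f3 x z)
     + (\<Sum>x\<in>A. \<Sum>z\<in>B. f4 x z) + (\<Sum>x\<in>A. \<Sum>z\<in>B. f5 x z) - 2 * (\<Sum>x\<in>A. \<Sum>z\<in>B. f6 x z)
     - 2 * (\<Sum>x\<in>A. \<Sum>z\<in>B. f7 x z) + 2 * (\<Sum>x\<in>A. \<Sum>z\<in>B. f8 x z) - 4 * (\<Sum>x\<in>A. \<Sum>z\<in>B. f9 x z)"
  by (simp add: sum.distrib sum_subtractf sum_distrib_left)

lemma lin4:
  fixes f g h :: "'b \<Rightarrow> 'c \<Rightarrow> int"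
  shows "(\<Sum>x\<in>A. \<Sum>z\<in>B. K0 + K2 * f x z + K3 * g x z + K1 * h x z)
   = int (card A) * int (card B) * K0 + K2 * (\<Sum>x\<in>A. \<Sum>z\<in>B. f x z) + K3 * (\<Sum>x\<in>A. \<Sum>z\<in>B. g x z)
     + K1 * (\<Sum>x\<in>A. \<Sum>z\<in>B. h x z)"
  by (simp add: sum.distrib sum_distrib_left)

context starx begin

lemma cr_sum:
  assumes y: "y \<in> L" and w: "w \<in> W m"
  shows "(\<Sum>y'\<in>L. \<Sum>w'\<in>W m. cr m y w y' w') = 2 * ix (pa y w \<noteq> w)"
proof -
  have "(\<Sum>y'\<in>L. \<Sum>w'\<in>W m. cr m y w y' w') = int (crs m w (pa y w))"
    unfolding crs_def cr_def by (auto simp: of_nat_sum intro!: sum.cong)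
  moreover have "crs m w (pa y w) = 2 * (if pa y w \<noteq> w then 1 else 0)"
  proof (cases "pa y w = w")
    case True
    then show ?thesis unfolding crs_def by simp
  next
    case False
    then show ?thesis using crs2[OF R_pa[OF y w]] by simp
  qed
  ultimately show ?thesis by simp
qed

lemma inner_ll:
  assumes y: "y \<in> L" and w: "w \<in> W m"
  shows "(\<Sum>y'\<in>L. \<Sum>w'\<in>W m. 2 * int (D (Suc m) (y # w) (y' # w'))) =
    4 * int (card L) * int (card (W m)) + 2 * int (card L) * ((\<Sum>w'\<in>W m. int (D m w w')) + (\<Sum>w'\<in>W m. int (D m (pa y w) w')))
    - 2 * ix (pa y w \<noteq> w) * int (card L) * int (card (W m)) - 2 * (int (card L) * int (card (W m)) - fx m)
    + 4 * ix (pa y w \<noteq> w) - 4"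
proof -
  have "(\<Sum>y'\<in>L. \<Sum>w'\<in>W m. 2 * int (D (Suc m) (y # w) (y' # w'))) =
     (\<Sum>y'\<in>L. \<Sum>w'\<in>W m. 4 + int (D m w w') + int (D m w (pa y' w'))
      + int (D m (pa y w) w') + int (D m (pa y w) (pa y' w'))
      - 2 * ix (pa y w \<noteq> w) - 2 * ix (pa y' w' \<noteq> w') + 2 * cr m y w y' w' - 4 * ix (y = y' \<and> w = w'))"
    by (rule sum.cong[OF refl], rule sum.cong[OF refl], rule P_ll[OF y w]) auto
  also have "\<dots> = (\<Sum>y'\<in>L. \<Sum>w'\<in>W m. 4 :: int) + (\<Sum>y'\<in>L. \<Sum>w'\<in>W m. int (D m w w')) + (\<Sum>y'\<in>L. \<Sum>w'\<in>W m. int (D m w (pa y' w')))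
      + (\<Sum>y'\<in>L. \<Sum>w'\<in>W m. int (D m (pa y w) w')) + (\<Sum>y'\<in>L. \<Sum>w'\<in>W m. int (D m (pa y w) (pa y' w')))
      - 2 * (\<Sum>y'\<in>L. \<Sum>w'\<in>W m. ix (pa y w \<noteq> w)) - 2 * (\<Sum>y'\<in>L. \<Sum>w'\<in>W m. ix (pa y' w' \<noteq> w'))
      + 2 * (\<Sum>y'\<in>L. \<Sum>w'\<in>W m. cr m y w y' w') - 4 * (\<Sum>y'\<in>L. \<Sum>w'\<in>W m. ix (y = y' \<and> w = w'))"
    by (rule lin9)
  also have "(\<Sum>y'\<in>L. \<Sum>w'\<in>W m. int (D m w (pa y' w'))) = (\<Sum>y'\<in>L. \<Sum>w'\<in>W m. int (D m w w'))"
    by (rule sum.cong[OF refl], rule sumpa) 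
  also have "(\<Sum>y'\<in>L. \<Sum>w'\<in>W m. int (D m (pa y w) (pa y' w'))) = (\<Sum>y'\<in>L. \<Sum>w'\<in>W m. int (D m (pa y w) w'))"
    by (rule sum.cong[OF refl], rule sumpa)
  also have "(\<Sum>y'\<in>L. \<Sum>w'\<in>W m. ix (pa y' w' \<noteq> w')) = int (card L) * int (card (W m)) - fx m"
    by (rule nfx)
  also have "(\<Sum>y'\<in>L. \<Sum>w'\<in>W m. cr m y w y' w') = 2 * ix (pa y w \<noteq> w)"
    by (rule cr_sum[OF y w])
  also have "(\<Sum>y'\<in>L. \<Sum>w'\<in>W m. ix (y = y' \<and> w = w')) = 1"
  proof -
    have "(\<Sum>y'\<in>L. \<Sum>w'\<in>W m. ix (y = y' \<and> w = w')) = (\<Sum>y'\<in>L. if y = y' then 1 else 0)"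
      by (rule sum.cong[OF refl]) (use w finW in auto)
    also have "\<dots> = 1" using y finL by simp
    finally show ?thesis .
  qed
  also have "(\<Sum>y'\<in>L. \<Sum>w'\<in>W m. int (D m w w')) = int (card L) * (\<Sum>w'\<in>W m. int (D m w w'))" by simp
  also have "(\<Sum>y'\<in>L. \<Sum>w'\<in>W m. int (D m (pa y w) w')) = int (card L) * (\<Sum>w'\<in>W m. int (D m (pa y w) w'))" by simp
  also have "(\<Sum>y'\<in>L. \<Sum>w'\<in>W m. ix (pa y w \<noteq> w)) = int (card L) * int (card (W m)) * ix (pa y w \<noteq> w)" by simp
  also have "(\<Sum>y'\<in>L. \<Sum>w'\<in>W m. 4 :: int) = 4 * int (card L) * int (card (W m))" by simp
  finally show ?thesis by (simp add: algebra_simps)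
qed

lemma partD: "2 * (\<Sum>y\<in>L. \<Sum>w\<in>W m. \<Sum>y'\<in>L. \<Sum>w'\<in>W m. int (D (Suc m) (y # w) (y' # w'))) =
   4 * (int (card L) * int (card (W m)))^2 + 4 * (int (card L))^2 * Sd m
   - 4 * (int (card L) * int (card (W m)) - fx m) * (int (card L) * int (card (W m)))
   + 4 * (int (card L) * int (card (W m)) - fx m) - 4 * int (card L) * int (card (W m))"
proof -
  define Lc where "Lc = int (card L)"
  define N where "N = int (card (W m))"
  define row where "row x = (\<Sum>w'\<in>W m. int (D m x w'))" for x
  have "2 * (\<Sum>y\<in>L. \<Sum>w\<in>W m. \<Sum>y'\<in>L. \<Sum>w'\<in>W m. int (D (Suc m) (y # w) (y' # w'))) =
     (\<Sum>y\<in>L. \<Sum>w\<in>W m. \<Sum>y'\<in>L. \<Sum>w'\<in>W m. 2 * int (D (Suc m) (y # w) (y' # w')))"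
    by (simp add: sum_distrib_left)
  also have "\<dots> = (\<Sum>y\<in>L. \<Sum>w\<in>W m. (4 * Lc * N - 2 * (Lc * N - fx m) - 4) + (2 * Lc) * row w + (2 * Lc) * row (pa y w)
     + (4 - 2 * Lc * N) * ix (pa y w \<noteq> w))"
  proof (rule sum.cong[OF refl], rule sum.cong[OF refl])
    fix y w assume "y \<in> L" "w \<in> W m"
    from inner_ll[OF this] show "(\<Sum>y'\<in>L. \<Sum>w'\<in>W m. 2 * int (D (Suc m) (y # w) (y' # w'))) =
      (4 * Lc * N - 2 * (Lc * N - fx m) - 4) + (2 * Lc) * row w + (2 * Lc) * row (pa y w)
     + (4 - 2 * Lc * N) * ix (pa y w \<noteq> w)"
      unfolding Lc_def N_def row_def by (simp add: algebra_simps)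
  qed
  also have "\<dots> = int (card L) * int (card (W m)) * (4 * Lc * N - 2 * (Lc * N - fx m) - 4)
     + (2 * Lc) * (\<Sum>y\<in>L. \<Sum>w\<in>W m. row w) + (2 * Lc) * (\<Sum>y\<in>L. \<Sum>w\<in>W m. row (pa y w))
     + (4 - 2 * Lc * N) * (\<Sum>y\<in>L. \<Sum>w\<in>W m. ix (pa y w \<noteq> w))"
    by (rule lin4)
  also have "(\<Sum>y\<in>L. \<Sum>w\<in>W m. row (pa y w)) = (\<Sum>y\<in>L. \<Sum>w\<in>W m. row w)"
    by (rule sum.cong[OF refl], rule sumpa)
  also have "(\<Sum>y\<in>L. \<Sum>w\<in>W m. row w) = Lc * Sd m"
    unfolding row_def Sd_def Lc_def by simp
  also have "(\<Sum>y\<in>L. \<Sum>w\<in>W m. ix (pa y w \<noteq> w)) = Lc * N - fx m"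
    unfolding Lc_def N_def by (rule nfx)
  finally show ?thesis unfolding Lc_def N_def by (simp add: algebra_simps power2_eq_square)
qed

end


definition FF :: "real \<Rightarrow> nat \<Rightarrow> real" where
  "FF K n = ((K - 1)^2 * (2 * K^2 - 2 * K - 1) / (K^3 * (2 * K - 1))) * 2^n * K^(2*n)
           - ((K - 1) * (K - 2) / K^2) * K^(2*n)
           + ((K - 1) * (K - 2) / (K^2 * (2 * K - 1))) * K^n"

lemma frac3:
  fixes K d a b e P Q R :: real
  assumes "K \<noteq> 0" "d \<noteq> 0"
  shows "a / (K^3 * d) * P - b / K^2 * Q + e / (K^2 * d) * R = (a * P - b * K * d * Q + e * K * R) / (K^3 * d)"
  using assms by (simp add: field_simps power2_eq_square power3_eq_cube)

definition Num :: "real \<Rightarrow> nat \<Rightarrow> real" where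
  "Num K n = (K - 1)^2 * (2 * K^2 - 2 * K - 1) * 2^n * K^(2*n) - (K - 1) * (K - 2) * K * (2 * K - 1) * K^(2*n)
     + (K - 1) * (K - 2) * K * K^n"

lemma FF_Num: "K \<ge> 1 \<Longrightarrow> FF K n = Num K n / (K^3 * (2 * K - 1))"
proof -
  assume K: "K \<ge> 1"
  have k0: "K \<noteq> 0" and k1: "2 * K - 1 \<noteq> 0" using K by auto
  have "FF K n = (K - 1)^2 * (2 * K^2 - 2 * K - 1) / (K^3 * (2 * K - 1)) * (2^n * K^(2*n))
           - ((K - 1) * (K - 2)) / K^2 * K^(2*n)
           + ((K - 1) * (K - 2)) / (K^2 * (2 * K - 1)) * K^n"
    unfolding FF_def by (simp add: mult.assoc)
  also have "\<dots> = Num K n / (K^3 * (2 * K - 1))"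
    unfolding frac3[OF k0 k1] Num_def by (simp add: algebra_simps)
  finally show ?thesis .
qed

lemma FF1: "K \<ge> 1 \<Longrightarrow> FF K 1 = (K - 1)^2"
proof -
  assume K: "K \<ge> 1"
  have k: "K^3 * (2 * K - 1) \<noteq> 0" using K by auto
  have "Num K 1 = (K - 1)^2 * (K^3 * (2 * K - 1))"
    unfolding Num_def by (simp add: algebra_simps power2_eq_square power3_eq_cube)
  then show ?thesis using FF_Num[OF K] k by simp
qed

lemma FFstep: "K \<ge> 1 \<Longrightarrow> FF K (Suc (Suc j)) = 2 * K^2 * FF K (Suc j) + (K - 1) * (K - 2) * K^j * (K^(Suc (Suc j)) - 1)"
proof -
  assume K: "K \<ge> 1"
  have k: "K^3 * (2 * K - 1) \<noteq> 0" using K by auto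
  have q1: "K^(2 * Suc (Suc j)) = K^j * K^j * K^4"
  proof -
    have "2 * Suc (Suc j) = j + j + 4" by simp
    then show ?thesis by (simp only: power_add)
  qed
  have q2: "K^(2 * Suc j) = K^j * K^j * K^2"
  proof -
    have "2 * Suc j = j + j + 2" by simp
    then show ?thesis by (simp only: power_add)
  qed
  have q3: "K^(Suc (Suc j)) = K^j * K^2" "K^(Suc j) = K^j * K" "(2::real)^(Suc (Suc j)) = 2^j * 4"
    "(2::real)^(Suc j) = 2^j * 2" by (simp_all add: power_Suc power2_eq_square algebra_simps)
  define E where "E = (K - 1) * (K - 2) * K^j * (K^(Suc (Suc j)) - 1)"
  define d where "d = K^3 * (2 * K - 1)"
  have NN: "Num K (Suc (Suc j)) = 2 * K^2 * Num K (Suc j) + E * d"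
    unfolding Num_def q1 q2 q3 E_def d_def by algebra
  have "FF K (Suc (Suc j)) = Num K (Suc (Suc j)) / d" using FF_Num[OF K] unfolding d_def by simp
  also have "\<dots> = (2 * K^2 * Num K (Suc j) + E * d) / d" by (simp only: NN)
  also have "\<dots> = 2 * K^2 * (Num K (Suc j) / d) + E" using k unfolding d_def by (simp add: add_divide_distrib)
  also have "\<dots> = 2 * K^2 * FF K (Suc j) + E" using FF_Num[OF K] unfolding d_def by simp
  finally show ?thesis unfolding E_def .
qed


context starx begin

lemma Sd_Suc: "Sd (Suc m) = 2 * (int (card L) + 1)^2 * Sd m + 2 * fx m * ((int (card L) + 1) * int (card (W m)) - 1)"
proof -
  have "Sd (Suc m) = (\<Sum>w\<in>W m. \<Sum>w'\<in>W m. int (D (Suc m) (c # w) (c # w')))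
     + (\<Sum>w\<in>W m. \<Sum>y'\<in>L. \<Sum>w'\<in>W m. int (D (Suc m) (c # w) (y' # w')))
     + ((\<Sum>y\<in>L. \<Sum>w\<in>W m. \<Sum>w'\<in>W m. int (D (Suc m) (y # w) (c # w')))
     + (\<Sum>y\<in>L. \<Sum>w\<in>W m. \<Sum>y'\<in>L. \<Sum>w'\<in>W m. int (D (Suc m) (y # w) (y' # w'))))"
    unfolding Sd_def by (simp add: sum_WS sum.distrib)
  then have "2 * Sd (Suc m) = 2 * (2 * Sd m) + 2 * (2 * int (card L) * Sd m + int (card (W m)) * fx m)
     + 2 * (2 * int (card L) * Sd m + int (card (W m)) * fx m)
     + (4 * (int (card L) * int (card (W m)))^2 + 4 * (int (card L))^2 * Sd m
   - 4 * (int (card L) * int (card (W m)) - fx m) * (int (card L) * int (card (W m)))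
   + 4 * (int (card L) * int (card (W m)) - fx m) - 4 * int (card L) * int (card (W m)))"
    using partA partB partC partD by simp
  then show ?thesis by (simp add: algebra_simps power2_eq_square)
qed

lemma Sd_0: "Sd 0 = 0"
  unfolding Sd_def words_0 by simp

lemma fx_0: "fx 0 = int (card L)"
  unfolding fx_def words_0 by simp

lemma fx_Suc: "fx (Suc m) = int (card L) * (int (card L) - 1) * int (card (W m))"
proof -
  have "(\<Sum>z\<in>W (Suc m). ix (pa y z = z)) = (int (card L) - 1) * int (card (W m))" if y: "y \<in> L" for y
  proof -
    have "(\<Sum>z\<in>W (Suc m). ix (pa y z = z)) = (\<Sum>w\<in>W m. ix (pa y (c # w) = c # w)) + (\<Sum>a\<in>L. \<Sum>w\<in>W m. ix (pa y (a # w) = a # w))"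
      by (rule sum_WS)
    also have "(\<Sum>w\<in>W m. ix (pa y (c # w) = c # w)) = 0" using yc[OF y] by simp
    also have "(\<Sum>a\<in>L. \<Sum>w\<in>W m. ix (pa y (a # w) = a # w)) = (\<Sum>a\<in>L. int (card (W m)) - (if a = y then int (card (W m)) else 0))"
    proof (rule sum.cong[OF refl])
      fix a assume a: "a \<in> L"
      show "(\<Sum>w\<in>W m. ix (pa y (a # w) = a # w)) = int (card (W m)) - (if a = y then int (card (W m)) else 0)"
      proof (cases "a = y")
        case True then show ?thesis using yc[OF y] by simp
      next
        case False then show ?thesis using a by simp
      qed
    qed
    also have "\<dots> = (int (card L) - 1) * int (card (W m))"
      using y finL by (simp add: sum_subtractf algebra_simps)
    finally show ?thesis by simp
  qed
  then have "fx (Suc m) = (\<Sum>y\<in>L. (int (card L) - 1) * int (card (W m)))"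
    unfolding fx_def by (rule sum.cong[OF refl])
  then show ?thesis by simp
qed

lemma cardV1: "card V \<ge> 1"
proof -
  have "card V > 0" using cV finV card_gt_0_iff by blast
  then show ?thesis by simp
qed

lemma cardL: "int (card L) = int (card V) - 1"
proof -
  have "card L = card V - 1" using cV by (simp add: card_Diff_singleton)
  then show ?thesis using cardV1 by (simp add: of_nat_diff)
qed

lemma Sd_closed:
  "real_of_int (Sd (Suc j)) = 2 * FF (real (card V)) (Suc j)"
proof (induction j)
  case 0
  have cL: "int (card L) = int (card V) - 1" by (rule cardL)
  have w0: "card (W 0) = 1" by (simp add: words_0)
  have "Sd 1 = 2 * int (card L) * int (card L)"
    using Sd_Suc[of 0] Sd_0 fx_0 w0 by simp
  then have "Sd 1 = 2 * (int (card V) - 1)^2" using cL by (simp add: power2_eq_square)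
  then have "real_of_int (Sd 1) = 2 * (real (card V) - 1)^2" by simp
  moreover have "FF (real (card V)) 1 = (real (card V) - 1)^2" using FF1 cardV1 by simp
  ultimately show ?case by simp
next
  case (Suc j)
  define K where "K = real (card V)"
  have K1: "K \<ge> 1" unfolding K_def using cV finV by (metis One_nat_def Suc_leI card_gt_0_iff empty_iff of_nat_1 of_nat_le_iff)
  have cL: "real_of_int (int (card L)) = K - 1" unfolding K_def using cardL
    by (metis of_int_1 of_int_diff of_int_of_nat_eq)
  have cW: "real (card (W m)) = K ^ m" for m unfolding K_def using card_words finV by simp
  have cL': "real (card L) = K - 1" using cL by simp
  have "real_of_int (Sd (Suc (Suc j))) = real_of_int (2 * (int (card L) + 1)^2 * Sd (Suc j) + 2 * fx (Suc j) * ((int (card L) + 1) * int (card (W (Suc j))) - 1))"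
    using arg_cong[OF Sd_Suc[of "Suc j"], of real_of_int] .
  also have "\<dots> = 2 * K^2 * real_of_int (Sd (Suc j))
        + 2 * real_of_int (fx (Suc j)) * (K * real (card (W (Suc j))) - 1)"
    by (simp add: cL')
  also have "real_of_int (fx (Suc j)) = (K - 1) * (K - 2) * K^j"
  proof -
    have "real_of_int (fx (Suc j)) = real_of_int (int (card L) * (int (card L) - 1) * int (card (W j)))"
      using arg_cong[OF fx_Suc[of j], of real_of_int] .
    also have "\<dots> = (K - 1) * (K - 2) * K^j" using cL' cW[of j] by simp
    finally show ?thesis .
  qed
  also have "real_of_int (Sd (Suc j)) = 2 * FF K (Suc j)" using Suc.IH unfolding K_def .
  also have "real (card (W (Suc j))) = K ^ Suc j" by (rule cW)
  finally have "real_of_int (Sd (Suc (Suc j))) = 2 * (2 * K^2 * FF K (Suc j) + (K - 1) * (K - 2) * K^j * (K * K ^ Suc j - 1))"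
    by (simp add: algebra_simps)
  also have "\<dots> = 2 * FF K (Suc (Suc j))" using FFstep[OF K1, of j] by simp
  finally show ?case unfolding K_def .
qed

end

theorem corollary5p9:
  fixes V :: "'a set" and E :: "('a \<times> 'a) set" and k n :: nat
  assumes "finite V" and "card V = k" and "k \<ge> 1"
    and "oriented_star V E" and "n \<ge> 1"
  shows "schreier_connected V E n \<and>
         schreier_wiener V E n =
           ((real k - 1)^2 * (2 * (real k)^2 - 2 * real k - 1) / ((real k)^3 * (2 * real k - 1)))
              * 2^n * (real k)^(2*n)
           - ((real k - 1) * (real k - 2) / (real k)^2) * (real k)^(2*n)
           + ((real k - 1) * (real k - 2) / ((real k)^2 * (2 * real k - 1))) * (real k)^n"
proof -
  obtain c where c: "c \<in> V" and b: "bij_betw (\<lambda>(s, t). {s, t}) E (star_edges V c)"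
    using assms(4) unfolding oriented_star_def by blast
  interpret st: starx V E c
  proof
    show "finite V" by (rule assms(1))
    show "c \<in> V" by (rule c)
  next
    fix e assume e: "e \<in> E"
    obtain s t where st: "e = (s, t)" by (cases e)
    have "{s, t} \<in> star_edges V c" using bij_betwE[OF b] e st by fastforce
    then obtain x where x: "x \<in> V - {c}" "{s, t} = {c, x}" unfolding star_edges_def by blast
    then have "(s = c \<and> t = x) \<or> (s = x \<and> t = c)" by (simp add: doubleton_eq_iff)
    then show "\<exists>y\<in>V - {c}. e = (c, y) \<or> e = (y, c)" using x(1) st by blast
  next
    fix y assume y: "y \<in> V - {c}"
    have "{c, y} \<in> star_edges V c" unfolding star_edges_def using y by blast
    then obtain e where e: "e \<in> E" "(\<lambda>(s, t). {s, t}) e = {c, y}"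
      using b unfolding bij_betw_def by (metis imageE)
    obtain s t where st: "e = (s, t)" by (cases e)
    have "{s, t} = {c, y}" using e(2) st by simp
    then have "(s = c \<and> t = y) \<or> (s = y \<and> t = c)" by (simp add: doubleton_eq_iff)
    then show "(c, y) \<in> E \<or> (y, c) \<in> E" using e(1) st by blast
  qed
  have conn: "schreier_connected V E n"
    using st.conn_all unfolding st.conn_def schreier_connected_def by blast
  have Wd: "schreier_wiener V E n = real_of_int (st.Sd n) / 2"
    unfolding schreier_wiener_def st.Sd_def by (simp add: of_int_sum)
  obtain j where j: "n = Suc j" using assms(5) by (cases n) auto
  have "real_of_int (st.Sd n) = 2 * FF (real (card V)) n"
    using st.Sd_closed[of j] j by simp
  then have "schreier_wiener V E n = FF (real k) n" using Wd assms(2) by simp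
  then show ?thesis using conn unfolding FF_def by simp
qed

end
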